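(* Fix $c>0$, constants $u_{X_i}\ge 0$ ($i=1,\dots,d$), $0\le a_i\le b_i\le 1$ and boxes $B_i=\{x\in\mathcal{D}_0:\underline{x}_{ji}\le x_j\le\bar x_{ji},\,j=1,\dots,d\}$ ($i=1,\dots,n$, with $x_{j0}\le\underline{x}_{ji}\le\bar x_{ji}\le\infty$), and a Lebesgue measurable set $S\subset\mathcal{D}_0$. Problem (A): maximize $c\int_0^\infty \frac{\lambda_d(S\cap\bar C_s)}{\lambda_d(\bar C_s)}g(s)\,ds$ over nonnegative measurable $f$ on $\mathcal{D}_0$ with $\int_{\mathcal{D}_0}f=c$, $f(x')\ge f(x)$ whenever $x\ge x'\ge x_0$, and $f(x)=\limsup_{y\to x,\,y\in\mathcal{D}_0^\circ}f(y)$ for $x\in\partial\mathcal{D}_0$, subject to $\int_0^\infty\frac{\lambda_{d-1}(\bar C_{s,i})}{\lambda_d(\bar C_s)}g(s)\,ds\le u_{X_i}/c$ for $i=1,\dots,d$ and $a_i\le\int_0^\infty\frac{\lambda_d(B_i\cap\bar C_s)}{\lambda_d(\bar C_s)}g(s)\,ds\le b_i$ for $i=1,\dots,n$, where $C_s=\{x\in\mathcal{D}_0:f(x)\ge s\}$, $\bar C_s$ is its closure and $g(s)=\lambda_d(\bar C_s)/c$. Problem (B): maximize $c\int_0^\infty\frac{\lambda_d(S\cap R_s)}{\lambda_d(R_s)}dG(s)$ over families $\{R_s\subset\mathcal{D}_0: s>0\}$ of closed OU sets about $x_0$ with $\lambda_d(R_s)\in(0,\infty)$ and $\lambda_{d-1}(R_{s,i})\in(0,\infty)$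 for all $s>0$ and $i$, and probability distributions $G$ on $(0,\infty)$, subject to $\int_0^\infty\frac{\lambda_{d-1}(R_{s,i})}{\lambda_d(R_s)}dG(s)\le u_{X_i}/c$ ($i=1,\dots,d$), $a_i\le\int_0^\infty\frac{\lambda_d(B_i\cap R_s)}{\lambda_d(R_s)}dG(s)\le b_i$ ($i=1,\dots,n$), and all integrands being measurable in $s$. Then the optimal value of (B) is not less than the optimal value of (A).
   Context: $\mathcal{D}_0=\{x\in\mathbb{R}^d:x\ge x_0\}$ (componentwise), $x_0=(x_{10},\dots,x_{d0})$; $\mathcal{D}_0^\circ$ and $\partial\mathcal{D}_0$ are its interior and boundary. A set $K\subset\mathcal{D}_0$ is OU about $x_0$ if $x\in K$ and $x\ge x'\ge x_0$ imply $x'\in K$. $\lambda_d,\lambda_{d-1}$ are Lebesgue measures on $\mathbb{R}^d,\mathbb{R}^{d-1}$. For $K\subset\mathcal{D}_0$, the slice $K_i=\{(x_1,\dots,x_{i-1},x_{i+1},\dots,x_d):(x_1,\dots,x_{i-1},x_{i0},x_{i+1},\dots,x_d)\in K\}$. Conventions: $\lambda_{d-1}(K_i)/\lambda_d(K)=0$ if $K=\emptyset$, and $\lambda_d(K'\cap K)/\lambda_d(K)=0$ for any measurable $K'$ if $\lambda_d(K)=0$. *)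

theory Defs
  imports "HOL-Probability.Probability"
begin

text \<open>Points of R^d are represented as extensional functions nat => real
  supported on the index set {..<d} (coordinates 0..d-1 correspond to 1..d).
  R^(d-1) for the slice K_i is represented on the index set {..<d} - {i}.\<close>

definition Leb :: "nat set \<Rightarrow> (nat \<Rightarrow> real) measure" where
  "Leb I = completion (PiM I (\<lambda>_. lborel))"

abbreviation lam_d :: "nat \<Rightarrow> (nat \<Rightarrow> real) measure" where
  "lam_d d \<equiv> Leb {..<d}"

abbreviation lam_dm1 :: "nat \<Rightarrow> nat \<Rightarrow> (nat \<Rightarrow> real) measure" where
  "lam_dm1 d i \<equiv> Leb ({..<d} - {i})"

definition D0 :: "nat \<Rightarrow> (nat \<Rightarrow> real) \<Rightarrow> (nat \<Rightarrow> real) set" where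
  "D0 d x0 = {x \<in> PiE {..<d} (\<lambda>_. UNIV). \<forall>j<d. x0 j \<le> x j}"

definition D0_int :: "nat \<Rightarrow> (nat \<Rightarrow> real) \<Rightarrow> (nat \<Rightarrow> real) set" where
  "D0_int d x0 = {x \<in> PiE {..<d} (\<lambda>_. UNIV). \<forall>j<d. x0 j < x j}"

definition D0_bd :: "nat \<Rightarrow> (nat \<Rightarrow> real) \<Rightarrow> (nat \<Rightarrow> real) set" where
  "D0_bd d x0 = D0 d x0 - D0_int d x0"

definition OU :: "nat \<Rightarrow> (nat \<Rightarrow> real) \<Rightarrow> (nat \<Rightarrow> real) set \<Rightarrow> bool" where
  "OU d x0 K \<longleftrightarrow> K \<subseteq> D0 d x0 \<and>
     (\<forall>x \<in> K. \<forall>x' \<in> D0 d x0. (\<forall>j<d. x' j \<le> x j) \<longrightarrow> x' \<in> K)"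

definition slice :: "nat \<Rightarrow> (nat \<Rightarrow> real) \<Rightarrow> (nat \<Rightarrow> real) set \<Rightarrow> nat \<Rightarrow> (nat \<Rightarrow> real) set" where
  "slice d x0 K i = {y \<in> PiE ({..<d} - {i}) (\<lambda>_. UNIV). y(i := x0 i) \<in> K}"

definition Bx :: "nat \<Rightarrow> (nat \<Rightarrow> real) \<Rightarrow> (nat \<Rightarrow> real) \<Rightarrow> (nat \<Rightarrow> ereal) \<Rightarrow> (nat \<Rightarrow> real) set" where
  "Bx d x0 lo hi = {x \<in> D0 d x0. \<forall>j<d. lo j \<le> x j \<and> ereal (x j) \<le> hi j}"

definition Cbar :: "nat \<Rightarrow> (nat \<Rightarrow> real) \<Rightarrow> ((nat \<Rightarrow> real) \<Rightarrow> real) \<Rightarrow> real \<Rightarrow> (nat \<Rightarrow> real) set" where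
  "Cbar d x0 f s = closure {x \<in> D0 d x0. s \<le> f x}"

definition feasA :: "nat \<Rightarrow> (nat \<Rightarrow> real) \<Rightarrow> real \<Rightarrow> (nat \<Rightarrow> real) \<Rightarrow> nat \<Rightarrow> (nat \<Rightarrow> nat \<Rightarrow> real) \<Rightarrow> (nat \<Rightarrow> nat \<Rightarrow> ereal) \<Rightarrow> (nat \<Rightarrow> real) \<Rightarrow> (nat \<Rightarrow> real) \<Rightarrow> ((nat \<Rightarrow> real) \<Rightarrow> real) \<Rightarrow> bool" where
  "feasA d x0 c u n lo hi a b f \<longleftrightarrow>
     set_borel_measurable (lam_d d) (D0 d x0) f \<and>
     (\<forall>x \<in> D0 d x0. 0 \<le> f x) \<and>
     (\<integral>\<^sup>+ x \<in> D0 d x0. ennreal (f x) \<partial>lam_d d) = ennreal c \<and>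
     (\<forall>x \<in> D0 d x0. \<forall>x' \<in> D0 d x0. (\<forall>j<d. x' j \<le> x j) \<longrightarrow> f x \<le> f x') \<and>
     (\<forall>x \<in> D0_bd d x0. ereal (f x) = Limsup (at x within D0_int d x0) (\<lambda>y. ereal (f y))) \<and>
     (let g = (\<lambda>s. emeasure (lam_d d) (Cbar d x0 f s) / ennreal c) in
       (\<forall>i<d. (\<integral>\<^sup>+ s \<in> {0<..}. emeasure (lam_dm1 d i) (slice d x0 (Cbar d x0 f s) i)
                 / emeasure (lam_d d) (Cbar d x0 f s) * g s \<partial>lborel) \<le> ennreal (u i / c)) \<and>
       (\<forall>i<n. ennreal (a i) \<le> (\<integral>\<^sup>+ s \<in> {0<..}. emeasure (lam_d d) (Bx d x0 (lo i) (hi i) \<inter> Cbar d x0 f s)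
                 / emeasure (lam_d d) (Cbar d x0 f s) * g s \<partial>lborel) \<and>
              (\<integral>\<^sup>+ s \<in> {0<..}. emeasure (lam_d d) (Bx d x0 (lo i) (hi i) \<inter> Cbar d x0 f s)
                 / emeasure (lam_d d) (Cbar d x0 f s) * g s \<partial>lborel) \<le> ennreal (b i)))"

definition objA :: "nat \<Rightarrow> (nat \<Rightarrow> real) \<Rightarrow> real \<Rightarrow> (nat \<Rightarrow> real) set \<Rightarrow> ((nat \<Rightarrow> real) \<Rightarrow> real) \<Rightarrow> ennreal" where
  "objA d x0 c S f = ennreal c * (\<integral>\<^sup>+ s \<in> {0<..}. emeasure (lam_d d) (S \<inter> Cbar d x0 f s)
      / emeasure (lam_d d) (Cbar d x0 f s) * (emeasure (lam_d d) (Cbar d x0 f s) / ennreal c) \<partial>lborel)"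

definition feasB :: "nat \<Rightarrow> (nat \<Rightarrow> real) \<Rightarrow> real \<Rightarrow> (nat \<Rightarrow> real) \<Rightarrow> nat \<Rightarrow> (nat \<Rightarrow> nat \<Rightarrow> real) \<Rightarrow> (nat \<Rightarrow> nat \<Rightarrow> ereal) \<Rightarrow> (nat \<Rightarrow> real) \<Rightarrow> (nat \<Rightarrow> real) \<Rightarrow> (nat \<Rightarrow> real) set \<Rightarrow> (real \<Rightarrow> (nat \<Rightarrow> real) set) \<Rightarrow> real measure \<Rightarrow> bool" where
  "feasB d x0 c u n lo hi a b S R G \<longleftrightarrow>
     prob_space G \<and> space G = {0<..} \<and> sets G = sets (restrict_space borel {0<..}) \<and>
     (\<forall>s>0. closed (R s) \<and> OU d x0 (R s) \<and>
        0 < emeasure (lam_d d) (R s) \<and> emeasure (lam_d d) (R s) < \<infinity> \<and>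
        (\<forall>i<d. 0 < emeasure (lam_dm1 d i) (slice d x0 (R s) i) \<and>
               emeasure (lam_dm1 d i) (slice d x0 (R s) i) < \<infinity>)) \<and>
     (\<lambda>s. emeasure (lam_d d) (S \<inter> R s) / emeasure (lam_d d) (R s)) \<in> borel_measurable G \<and>
     (\<forall>i<d. (\<lambda>s. emeasure (lam_dm1 d i) (slice d x0 (R s) i) / emeasure (lam_d d) (R s))
              \<in> borel_measurable G) \<and>
     (\<forall>i<n. (\<lambda>s. emeasure (lam_d d) (Bx d x0 (lo i) (hi i) \<inter> R s) / emeasure (lam_d d) (R s))
              \<in> borel_measurable G) \<and>
     (\<forall>i<d. (\<integral>\<^sup>+ s. emeasure (lam_dm1 d i) (slice d x0 (R s) i) / emeasure (lam_d d) (R s) \<partial>G)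
              \<le> ennreal (u i / c)) \<and>
     (\<forall>i<n. ennreal (a i) \<le> (\<integral>\<^sup>+ s. emeasure (lam_d d) (Bx d x0 (lo i) (hi i) \<inter> R s) / emeasure (lam_d d) (R s) \<partial>G) \<and>
            (\<integral>\<^sup>+ s. emeasure (lam_d d) (Bx d x0 (lo i) (hi i) \<inter> R s) / emeasure (lam_d d) (R s) \<partial>G) \<le> ennreal (b i))"

definition objB :: "nat \<Rightarrow> real \<Rightarrow> (nat \<Rightarrow> real) set \<Rightarrow> (real \<Rightarrow> (nat \<Rightarrow> real) set) \<Rightarrow> real measure \<Rightarrow> ennreal" where
  "objB d c S R G = ennreal c * (\<integral>\<^sup>+ s. emeasure (lam_d d) (S \<inter> R s) / emeasure (lam_d d) (R s) \<partial>G)"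

text \<open>Optimal values (suprema, in the extended reals; empty feasible set gives -\<infinity>)\<close>
definition optA :: "nat \<Rightarrow> (nat \<Rightarrow> real) \<Rightarrow> real \<Rightarrow> (nat \<Rightarrow> real) \<Rightarrow> nat \<Rightarrow> (nat \<Rightarrow> nat \<Rightarrow> real) \<Rightarrow> (nat \<Rightarrow> nat \<Rightarrow> ereal) \<Rightarrow> (nat \<Rightarrow> real) \<Rightarrow> (nat \<Rightarrow> real) \<Rightarrow> (nat \<Rightarrow> real) set \<Rightarrow> ereal" where
  "optA d x0 c u n lo hi a b S =
     Sup {enn2ereal (objA d x0 c S f) | f. feasA d x0 c u n lo hi a b f}"

definition optB :: "nat \<Rightarrow> (nat \<Rightarrow> real) \<Rightarrow> real \<Rightarrow> (nat \<Rightarrow> real) \<Rightarrow> nat \<Rightarrow> (nat \<Rightarrow> nat \<Rightarrow> real) \<Rightarrow> (nat \<Rightarrow> nat \<Rightarrow> ereal) \<Rightarrow> (nat \<Rightarrow> real) \<Rightarrow> (nat \<Rightarrow> real) \<Rightarrow> (nat \<Rightarrow> real) set \<Rightarrow> ereal" where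
  "optB d x0 c u n lo hi a b S =
     Sup {enn2ereal (objB d c S R G) | R G. feasB d x0 c u n lo hi a b S R G}"

end

theory Submission
  imports Defs
begin


lemma id_meas_PiM_UNIV:
  "(\<lambda>x. x) \<in> measurable (PiM I (\<lambda>_. lborel)) (PiM UNIV (\<lambda>_. borel :: real measure))"
proof -
  have "(\<lambda>\<omega> i. \<omega> i) \<in> measurable (PiM I (\<lambda>_. lborel)) (PiM UNIV (\<lambda>_. borel :: real measure))"
  proof (rule measurable_PiM_single')
    fix i :: 'a
    show "(\<lambda>\<omega>. \<omega> i) \<in> measurable (PiM I (\<lambda>_. lborel)) (borel :: real measure)"
    proof (cases "i \<in> I")
      case True
      then show ?thesis using measurable_component_singleton[OF True, of "\<lambda>_. lborel"]
        by (simp add: measurable_cong_sets[OF refl sets_lborel])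
    next
      case False
      have "(\<lambda>\<omega>. undefined :: real) \<in> measurable (PiM I (\<lambda>_. lborel)) borel" by simp
      then show ?thesis
        by (rule measurable_cong[THEN iffD1, rotated]) (use False in \<open>auto simp: space_PiM PiE_def extensional_def\<close>)
    qed
  qed (auto simp: space_PiM)
  then show ?thesis by simp
qed

lemma sets_PiM_borelset:
  assumes "A \<in> sets (borel :: (nat \<Rightarrow> real) measure)"
  shows "A \<inter> PiE I (\<lambda>_. UNIV) \<in> sets (PiM I (\<lambda>_. lborel))"
proof -
  have "A \<in> sets (PiM UNIV (\<lambda>_. borel :: real measure))" using assms sets_PiM_equal_borel by blast
  from measurable_sets[OF id_meas_PiM_UNIV this, of I]
  show ?thesis by (simp add: space_PiM Int_commute)
qed

lemma sets_PiM_closed: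
  assumes "closed (A :: (nat \<Rightarrow> real) set)"
  shows "A \<inter> PiE I (\<lambda>_. UNIV) \<in> sets (PiM I (\<lambda>_. lborel))"
  using sets_PiM_borelset[OF borel_closed[OF assms]] .

lemma closed_PiE_UNIV: "closed (PiE I (\<lambda>_. UNIV) :: (nat \<Rightarrow> real) set)"
proof -
  have "PiE I (\<lambda>_. UNIV) = (\<Inter>j\<in>-I. {x :: nat \<Rightarrow> real. x j = undefined})"
    by (auto simp: PiE_def extensional_def)
  moreover have "closed {x :: nat \<Rightarrow> real. x j = undefined}" for j
    by (intro closed_Collect_eq continuous_intros) simp
  ultimately show ?thesis by auto
qed



interpretation PL: product_sigma_finite "\<lambda>_::nat. lborel :: real measure"
  by (simp add: product_sigma_finite_def lborel.sigma_finite_measure_axioms)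

lemma closed_D0: "closed (D0 d x0)"
proof -
  have "D0 d x0 = PiE {..<d} (\<lambda>_. UNIV) \<inter> (\<Inter>j\<in>{..<d}. {x. x0 j \<le> x j})"
    by (auto simp: D0_def)
  moreover have "closed {x :: nat \<Rightarrow> real. x0 j \<le> x j}" for j
    by (intro closed_Collect_le continuous_intros) simp
  ultimately show ?thesis by (simp only:) (intro closed_Int closed_PiE_UNIV closed_INT, auto)
qed

lemma D0_PiE: "D0 d x0 \<subseteq> PiE {..<d} (\<lambda>_. UNIV)"
  by (auto simp: D0_def)

lemma sets_Leb_closed:
  assumes "closed A" "A \<subseteq> PiE I (\<lambda>_. UNIV)"
  shows "A \<in> sets (Leb I)"
proof -
  have "A = A \<inter> PiE I (\<lambda>_. UNIV)" using assms by auto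
  then show ?thesis using sets_PiM_closed[OF assms(1), of I] unfolding Leb_def by auto
qed

lemma space_Leb: "space (Leb I) = PiE I (\<lambda>_. UNIV)"
  by (simp add: Leb_def space_PiM)

lemma D0_sets: "D0 d x0 \<in> sets (lam_d d)"
  by (rule sets_Leb_closed[OF closed_D0 D0_PiE])

lemma hyperplane_null:
  fixes I :: "nat set"
  assumes "j \<in> I" "finite I"
  shows "PiE I (\<lambda>k. if k = j then {c} else UNIV) \<in> null_sets (PiM I (\<lambda>_. lborel :: real measure))"
proof -
  have s: "PiE I (\<lambda>k. if k = j then {c} else UNIV) \<in> sets (PiM I (\<lambda>_. lborel :: real measure))"
    using assms by (intro sets_PiM_I_finite) auto
  have "emeasure (PiM I (\<lambda>_. lborel :: real measure)) (PiE I (\<lambda>k. if k = j then {c} else UNIV))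
      = (\<Prod>k\<in>I. emeasure lborel (if k = j then {c} else UNIV))"
    using assms by (intro PL.emeasure_PiM) auto
  also have "\<dots> = 0" using assms by (intro prod_zero) auto
  finally show ?thesis using s by auto
qed

lemma D0_bd_null: "D0 d x0 - D0_int d x0 \<in> null_sets (lam_d d)"
proof -
  let ?N = "\<Union>j<d. PiE {..<d} (\<lambda>k. if k = j then {x0 j} else UNIV)"
  have "?N \<in> null_sets (PiM {..<d} (\<lambda>_. lborel :: real measure))"
    by (intro null_sets_UN') (auto intro: hyperplane_null)
  moreover have "D0 d x0 - D0_int d x0 \<subseteq> ?N"
  proof
    fix x assume x: "x \<in> D0 d x0 - D0_int d x0"
    then obtain j where j: "j < d" "\<not> x0 j < x j" by (auto simp: D0_def D0_int_def)
    with x have "x j = x0 j" by (auto simp: D0_def)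
    with x j show "x \<in> ?N" by (auto simp: D0_def PiE_def Pi_def)
  qed
  ultimately show ?thesis unfolding Leb_def null_sets_completion_iff2 by blast
qed



lemma lborel_shift: "emeasure lborel ((\<lambda>t. t + c) -` A) = emeasure lborel (A :: real set)"
  if "A \<in> sets borel"
proof -
  have "emeasure (distr lborel borel ((+) c)) A = emeasure lborel ((+) c -` A \<inter> space lborel)"
    using that by (intro emeasure_distr) auto
  moreover have "(\<lambda>t. t + c) = (+) c" by (auto simp: add.commute)
  ultimately show ?thesis by (simp add: lborel_distr_plus)
qed

lemma shift_pre_borel: "(\<lambda>t::real. t + c) -` S \<in> sets borel" if "S \<in> sets borel"
proof -
  have "(\<lambda>t::real. t + c) \<in> borel_measurable borel" by simp
  from measurable_sets[OF this that] show ?thesis by simp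
qed

lemma shift_meas:
  fixes I :: "nat set"
  shows "(\<lambda>x. restrict (\<lambda>j. x j + e j) I) \<in> measurable (PiM I (\<lambda>_. lborel)) (PiM I (\<lambda>_. lborel :: real measure))"
  by measurable

lemma PiM_shift:
  fixes I :: "nat set"
  assumes "finite I"
  shows "distr (PiM I (\<lambda>_. lborel)) (PiM I (\<lambda>_. lborel)) (\<lambda>x. restrict (\<lambda>j. x j + e j) I) = PiM I (\<lambda>_. lborel :: real measure)"
proof (rule PL.PiM_eqI[OF assms])
  show "sets (distr (PiM I (\<lambda>_. lborel)) (PiM I (\<lambda>_. lborel)) (\<lambda>x. restrict (\<lambda>j. x j + e j) I)) = sets (PiM I (\<lambda>_. lborel))"
    by simp
  fix A :: "nat \<Rightarrow> real set" assume A: "\<And>i. i \<in> I \<Longrightarrow> A i \<in> sets lborel"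
  have pre: "(\<lambda>x. restrict (\<lambda>j. x j + e j) I) -` PiE I A \<inter> space (PiM I (\<lambda>_. lborel))
      = PiE I (\<lambda>j. (\<lambda>t. t + e j) -` A j)"
    by (auto simp: space_PiM PiE_def Pi_def extensional_def)
  have "emeasure (distr (PiM I (\<lambda>_. lborel)) (PiM I (\<lambda>_. lborel)) (\<lambda>x. restrict (\<lambda>j. x j + e j) I)) (PiE I A)
     = emeasure (PiM I (\<lambda>_. lborel)) (PiE I (\<lambda>j. (\<lambda>t. t + e j) -` A j))"
    using A assms by (subst emeasure_distr[OF shift_meas]) (auto simp: pre intro!: sets_PiM_I_finite shift_pre_borel)
  also have "\<dots> = (\<Prod>j\<in>I. emeasure lborel ((\<lambda>t. t + e j) -` A j))"
    using A assms by (intro PL.emeasure_PiM) (auto intro: shift_pre_borel)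
  also have "\<dots> = (\<Prod>j\<in>I. emeasure lborel (A j))"
    using A by (intro prod.cong refl lborel_shift) auto
  finally show "emeasure (distr (PiM I (\<lambda>_. lborel)) (PiM I (\<lambda>_. lborel)) (\<lambda>x. restrict (\<lambda>j. x j + e j) I)) (PiE I A) = (\<Prod>j\<in>I. emeasure lborel (A j))" .
qed

lemma shift_le:
  fixes I :: "nat set"
  assumes "finite I" "B \<in> sets (Leb I)" "A \<in> sets (Leb I)"
    and sub: "\<And>x. x \<in> A \<Longrightarrow> restrict (\<lambda>j. x j + e j) I \<in> B"
  shows "emeasure (Leb I) A \<le> emeasure (Leb I) B"
proof -
  let ?L = "PiM I (\<lambda>_. lborel :: real measure)"
  let ?T = "\<lambda>x. restrict (\<lambda>j. x j + e j) I"
  have B: "B \<in> sets (completion ?L)" using assms(2) by (simp add: Leb_def)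
  obtain N where N: "N \<in> null_sets ?L" "null_part ?L B \<subseteq> N" using null_part[OF B] by blast
  let ?B' = "main_part ?L B \<union> N"
  have B'sets: "?B' \<in> sets ?L" using B N by auto
  have eqB: "emeasure ?L ?B' = emeasure (Leb I) B"
    using B N by (simp add: Leb_def emeasure_Un_null_set)
  have BsubB': "B \<subseteq> ?B'" using main_part_null_part_Un[OF B] N by blast
  have Asp: "A \<subseteq> space ?L" using sets.sets_into_space[OF assms(3)] by (simp add: Leb_def)
  have AsubT: "A \<subseteq> ?T -` ?B' \<inter> space ?L" using sub BsubB' Asp by blast
  have Tsets: "?T -` ?B' \<inter> space ?L \<in> sets ?L"
    using measurable_sets[OF shift_meas B'sets] .
  have "emeasure (Leb I) A \<le> emeasure (Leb I) (?T -` ?B' \<inter> space ?L)"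
    using AsubT Tsets by (intro emeasure_mono) (auto simp: Leb_def)
  also have "\<dots> = emeasure ?L (?T -` ?B' \<inter> space ?L)"
    using Tsets by (simp add: Leb_def)
  also have "\<dots> = emeasure (distr ?L ?L ?T) ?B'"
    using B'sets by (subst emeasure_distr[OF shift_meas]) auto
  also have "\<dots> = emeasure ?L ?B'" by (simp add: PiM_shift[OF assms(1)])
  finally show ?thesis using eqB by simp
qed



lemma cont_coord: "continuous_on S (\<lambda>y::nat\<Rightarrow>real. y j)"
  by (rule continuous_on_product_then_coordinatewise[OF continuous_on_id])

lemma cont_restrict_min:
  "continuous_on S (\<lambda>y::nat\<Rightarrow>real. restrict (\<lambda>j. min (y j) (x' j)) I)"
proof (rule continuous_on_coordinatewise_then_product)
  fix j
  show "continuous_on S (\<lambda>y::nat\<Rightarrow>real. restrict (\<lambda>j. min (y j) (x' j)) I j)"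
  proof (cases "j \<in> I")
    case True
    have "continuous_on S (\<lambda>y::nat\<Rightarrow>real. min (y j) (x' j))"
      by (rule continuous_on_min[OF cont_coord continuous_on_const])
    then show ?thesis using True by simp
  next
    case False then show ?thesis by (simp add: continuous_on_const)
  qed
qed

lemma closure_OU:
  assumes K: "OU d x0 K"
  shows "OU d x0 (closure K)"
proof -
  have KD: "K \<subseteq> D0 d x0" using K by (simp add: OU_def)
  have cD: "closure K \<subseteq> D0 d x0" using closure_minimal[OF KD closed_D0] .
  show ?thesis unfolding OU_def
  proof (intro conjI cD ballI impI)
    fix x x' assume x: "x \<in> closure K" and x': "x' \<in> D0 d x0" and le: "\<forall>j<d. x' j \<le> x j"
    let ?phi = "\<lambda>y::nat\<Rightarrow>real. restrict (\<lambda>j. min (y j) (x' j)) {..<d}"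
    have "?phi ` K \<subseteq> K"
    proof
      fix z assume "z \<in> ?phi ` K"
      then obtain y where y: "y \<in> K" "z = ?phi y" by auto
      have yD: "y \<in> D0 d x0" using y KD by auto
      have "z \<in> D0 d x0" using yD x' by (auto simp: D0_def y(2))
      moreover have "\<forall>j<d. z j \<le> y j" by (auto simp: y(2))
      ultimately show "z \<in> K" using K y(1) by (auto simp: OU_def)
    qed
    then have "?phi ` K \<subseteq> closure K" using closure_subset by blast
    then have "?phi ` closure K \<subseteq> closure K"
      by (intro image_closure_subset cont_restrict_min) auto
    with x have "?phi x \<in> closure K" by auto
    moreover have "?phi x = x'"
    proof
      fix j show "?phi x j = x' j"
        using le x' by (cases "j < d") (auto simp: D0_def PiE_def extensional_def)
    qed
    ultimately show "x' \<in> closure K" by simp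
  qed
qed

lemma open_strict_above: "open {z::nat\<Rightarrow>real. \<forall>j<d. c j < z j}"
proof -
  have "{z::nat\<Rightarrow>real. \<forall>j<d. c j < z j} = (\<Inter>j\<in>{..<d}. {z. c j < z j})" by auto
  moreover have "open {z::nat\<Rightarrow>real. c j < z j}" for j
    by (intro open_Collect_less continuous_intros) simp
  ultimately show ?thesis by (simp add: open_INT)
qed

lemma closure_measure:
  assumes K: "OU d x0 K" and Ks: "K \<in> sets (lam_d d)"
  shows "emeasure (lam_d d) (closure K) = emeasure (lam_d d) K"
proof (rule antisym)
  have KD: "K \<subseteq> D0 d x0" using K by (simp add: OU_def)
  have cD: "closure K \<subseteq> D0 d x0" using closure_minimal[OF KD closed_D0] .
  have cKs: "closure K \<in> sets (lam_d d)"
    by (intro sets_Leb_closed closed_closure) (use cD D0_PiE[of d x0] in blast)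
  show "emeasure (lam_d d) K \<le> emeasure (lam_d d) (closure K)"
    using cKs by (intro emeasure_mono closure_subset)
  define A where "A n = closure K \<inter> {x. \<forall>j<d. x0 j + 1 / real (Suc n) \<le> x j}" for n
  have Acl: "closed {x::nat\<Rightarrow>real. \<forall>j<d. x0 j + 1 / real (Suc n) \<le> x j}" for n
  proof -
    have "{x::nat\<Rightarrow>real. \<forall>j<d. x0 j + 1 / real (Suc n) \<le> x j} = (\<Inter>j\<in>{..<d}. {x. x0 j + 1 / real (Suc n) \<le> x j})" by auto
    moreover have "closed {x::nat\<Rightarrow>real. x0 j + 1 / real (Suc n) \<le> x j}" for j
      by (intro closed_Collect_le continuous_intros) simp
    ultimately show ?thesis by (simp add: closed_INT)
  qed
  have As: "A n \<in> sets (lam_d d)" for n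
    unfolding A_def by (intro sets_Leb_closed closed_Int Acl closed_closure) (use cD D0_PiE[of d x0] in blast)
  have Ale: "emeasure (lam_d d) (A n) \<le> emeasure (lam_d d) K" for n
  proof (rule shift_le[where e = "\<lambda>_. - 1 / real (Suc n)"])
    show "finite {..<d}" by simp
    show "K \<in> sets (lam_d d)" by fact
    show "A n \<in> sets (lam_d d)" by fact
    fix x assume xA: "x \<in> A n"
    let ?y = "restrict (\<lambda>j. x j + - 1 / real (Suc n)) {..<d}"
    let ?U = "{z::nat\<Rightarrow>real. \<forall>j<d. x j - 1 / real (Suc n) < z j}"
    have "x \<in> ?U" by auto
    moreover have "x \<in> closure K" using xA by (simp add: A_def)
    ultimately have "?U \<inter> K \<noteq> {}"
      using open_Int_closure_eq_empty[OF open_strict_above[of d "\<lambda>j. x j - 1 / real (Suc n)"], of K] by blast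
    then obtain z where z: "z \<in> K" "z \<in> ?U" by blast
    have "?y \<in> D0 d x0" using xA by (auto simp: A_def D0_def)
    moreover have "\<forall>j<d. ?y j \<le> z j" using z(2) by auto
    ultimately show "?y \<in> K" using K z(1) by (auto simp: OU_def)
  qed
  have inc: "incseq A"
  proof (rule incseq_SucI)
    fix n
    have "1 / real (Suc (Suc n)) \<le> 1 / real (Suc n)" by (simp add: frac_le)
    then show "A n \<subseteq> A (Suc n)" unfolding A_def by force
  qed
  have UA: "(\<Union>n. A n) = closure K \<inter> D0_int d x0"
  proof
    show "(\<Union>n. A n) \<subseteq> closure K \<inter> D0_int d x0"
    proof
      fix x assume "x \<in> (\<Union>n. A n)"
      then obtain n where xA: "x \<in> A n" by auto
      have p: "0 < 1 / real (Suc n)" by simp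
      have "\<forall>j<d. x0 j < x j"
      proof (intro allI impI)
        fix j assume "j < d"
        then have "x0 j + 1 / real (Suc n) \<le> x j" using xA by (auto simp: A_def)
        with p show "x0 j < x j" by linarith
      qed
      moreover have "x \<in> closure K" using xA by (auto simp: A_def)
      ultimately show "x \<in> closure K \<inter> D0_int d x0" using cD
        by (auto simp: D0_int_def D0_def)
    qed
    show "closure K \<inter> D0_int d x0 \<subseteq> (\<Union>n. A n)"
    proof
      fix x assume x: "x \<in> closure K \<inter> D0_int d x0"
      then have pos: "\<forall>j<d. 0 < x j - x0 j" by (auto simp: D0_int_def)
      show "x \<in> (\<Union>n. A n)"
      proof (cases "d = 0")
        case True then show ?thesis using x by (auto simp: A_def)
      next
        case False
        define m where "m = Min ((\<lambda>j. x j - x0 j) ` {..<d})"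
        have mpos: "0 < m" unfolding m_def using pos False by (subst Min_gr_iff) auto
        have mle: "\<forall>j<d. m \<le> x j - x0 j" unfolding m_def by auto
        obtain n where n: "1 / real (Suc n) < m" using reals_Archimedean[OF mpos] by (auto simp: inverse_eq_divide)
        have "\<forall>j<d. x0 j + 1 / real (Suc n) \<le> x j"
        proof (intro allI impI)
          fix j assume "j < d"
          then have "m \<le> x j - x0 j" using mle by auto
          with n show "x0 j + 1 / real (Suc n) \<le> x j" by linarith
        qed
        then have "x \<in> A n" using x by (auto simp: A_def)
        then show ?thesis by auto
      qed
    qed
  qed
  have "emeasure (lam_d d) (closure K) \<le> emeasure (lam_d d) ((\<Union>n. A n) \<union> (D0 d x0 - D0_int d x0))"
  proof (rule emeasure_mono)
    show "closure K \<subseteq> (\<Union>n. A n) \<union> (D0 d x0 - D0_int d x0)" using cD UA by blast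
    show "(\<Union>n. A n) \<union> (D0 d x0 - D0_int d x0) \<in> sets (lam_d d)"
      using As D0_bd_null[of d x0] by (intro sets.Un sets.countable_UN) auto
  qed
  also have "\<dots> \<le> emeasure (lam_d d) (\<Union>n. A n) + emeasure (lam_d d) (D0 d x0 - D0_int d x0)"
    by (intro emeasure_subadditive) (auto intro!: sets.countable_UN As D0_bd_null[THEN null_setsD2])
  also have "\<dots> = (SUP n. emeasure (lam_d d) (A n))"
  proof -
    have "emeasure (lam_d d) (D0 d x0 - D0_int d x0) = 0" using D0_bd_null[of d x0] by auto
    moreover have "(SUP n. emeasure (lam_d d) (A n)) = emeasure (lam_d d) (\<Union>n. A n)"
      using As by (intro SUP_emeasure_incseq inc) auto
    ultimately show ?thesis by simp
  qed
  also have "\<dots> \<le> emeasure (lam_d d) K" by (intro SUP_least Ale)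
  finally show "emeasure (lam_d d) (closure K) \<le> emeasure (lam_d d) K" .
qed



lemma sigma_finite_completion:
  assumes "sigma_finite_measure M"
  shows "sigma_finite_measure (completion M)"
proof
  from sigma_finite_measure.sigma_finite_countable[OF assms] obtain A where
    A: "countable A" "A \<subseteq> sets M" "\<Union>A = space M" "\<forall>a\<in>A. emeasure M a \<noteq> \<infinity>" by blast
  show "\<exists>A. countable A \<and> A \<subseteq> sets (completion M) \<and> \<Union> A = space (completion M) \<and> (\<forall>a\<in>A. emeasure (completion M) a \<noteq> \<infinity>)"
    using A by (intro exI[of _ A]) auto
qed

lemma sigma_finite_Leb: "finite I \<Longrightarrow> sigma_finite_measure (Leb I)"
  unfolding Leb_def by (intro sigma_finite_completion PL.sigma_finite)

lemma layer_cake: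
  assumes fm: "set_borel_measurable (lam_d d) (D0 d x0) f" and nn: "\<forall>x\<in>D0 d x0. 0 \<le> f x"
  shows "(\<integral>\<^sup>+ x\<in>D0 d x0. ennreal (f x) \<partial>lam_d d)
       = (\<integral>\<^sup>+ s\<in>{0<..}. emeasure (lam_d d) {x \<in> D0 d x0. s \<le> f x} \<partial>lborel)"
proof -
  interpret L: sigma_finite_measure "lam_d d" by (rule sigma_finite_Leb) simp
  interpret P: pair_sigma_finite "lam_d d" lborel ..
  define F where "F x = indicator (D0 d x0) x *\<^sub>R f x" for x
  have Fm[measurable]: "F \<in> borel_measurable (lam_d d)" 
  proof -
    have "F = (\<lambda>x. indicator (D0 d x0) x * f x)" by (auto simp: F_def fun_eq_iff)
    then show ?thesis using fm by (simp add: set_borel_measurable_def)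
  qed
  have Fnn: "0 \<le> F x" for x using nn by (auto simp: F_def indicator_def)
  have "(\<integral>\<^sup>+ x\<in>D0 d x0. ennreal (f x) \<partial>lam_d d) = (\<integral>\<^sup>+ x. ennreal (F x) \<partial>lam_d d)"
    by (intro nn_integral_cong) (auto simp: F_def indicator_def)
  also have "\<dots> = (\<integral>\<^sup>+ x. (\<integral>\<^sup>+ s. indicator {(x, s). 0 < s \<and> s \<le> F x} (x, s) \<partial>lborel) \<partial>lam_d d)"
  proof (intro nn_integral_cong)
    fix x
    have "(\<integral>\<^sup>+ s. indicator {(x, s). 0 < s \<and> s \<le> F x} (x, s) \<partial>lborel) = (\<integral>\<^sup>+ s. indicator {0<..F x} s \<partial>lborel)"
      by (intro nn_integral_cong) (auto simp: indicator_def)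
    also have "\<dots> = ennreal (F x)" using Fnn[of x] by simp
    finally show "ennreal (F x) = (\<integral>\<^sup>+ s. indicator {(x, s). 0 < s \<and> s \<le> F x} (x, s) \<partial>lborel)" ..
  qed
  also have "\<dots> = (\<integral>\<^sup>+ s. (\<integral>\<^sup>+ x. indicator {(x, s). 0 < s \<and> s \<le> F x} (x, s) \<partial>lam_d d) \<partial>lborel)"
  proof (rule P.Fubini'[symmetric])
    have "{(x, s). 0 < s \<and> s \<le> F x} \<inter> space (lam_d d \<Otimes>\<^sub>M lborel) \<in> sets (lam_d d \<Otimes>\<^sub>M lborel)"
      by measurable
    then show "case_prod (\<lambda>x s. indicator {(x, s). 0 < s \<and> s \<le> F x} (x, s) :: ennreal) \<in> borel_measurable (lam_d d \<Otimes>\<^sub>M lborel)"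
      by (simp add: borel_measurable_indicator_iff)
  qed
  also have "\<dots> = (\<integral>\<^sup>+ s\<in>{0<..}. emeasure (lam_d d) {x \<in> D0 d x0. s \<le> f x} \<partial>lborel)"
  proof (intro nn_integral_cong)
    fix s :: real
    show "(\<integral>\<^sup>+ x. indicator {(x, s). 0 < s \<and> s \<le> F x} (x, s) \<partial>lam_d d)
        = emeasure (lam_d d) {x \<in> D0 d x0. s \<le> f x} * indicator {0<..} s"
    proof (cases "0 < s")
      case True
      have eq: "{x \<in> space (lam_d d). s \<le> F x} = {x \<in> D0 d x0. s \<le> f x}"
        using True D0_PiE[of d x0] by (auto simp: F_def indicator_def space_Leb)
      have "(\<integral>\<^sup>+ x. indicator {(x, s). 0 < s \<and> s \<le> F x} (x, s) \<partial>lam_d d)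
          = (\<integral>\<^sup>+ x. indicator {x \<in> space (lam_d d). s \<le> F x} x \<partial>lam_d d)"
        using True by (intro nn_integral_cong) (auto simp: indicator_def)
      also have "\<dots> = emeasure (lam_d d) {x \<in> space (lam_d d). s \<le> F x}"
        by (intro nn_integral_indicator) measurable
      finally show ?thesis using True eq by simp
    next
      case False
      then show ?thesis by (simp add: indicator_def)
    qed
  qed
  finally show ?thesis .
qed



lemma downset_borel:
  fixes D :: "real set"
  assumes down: "\<And>s t. t \<in> D \<Longrightarrow> s \<le> t \<Longrightarrow> s \<in> D"
  shows "D \<in> sets borel"
proof (cases "D = {}")
  case True then show ?thesis by simp
next
  case ne: False
  show ?thesis
  proof (cases "bdd_above D")
    case False
    have "s \<in> D" for s
    proof -
      from False obtain t where "t \<in> D" "\<not> t \<le> s" unfolding bdd_above_def by blast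
      then show "s \<in> D" using down[of t s] by simp
    qed
    then have "D = UNIV" by auto
    then show ?thesis by simp
  next
    case True
    define m where "m = Sup D"
    have le: "t \<in> D \<Longrightarrow> t \<le> m" for t using True by (simp add: m_def cSup_upper)
    have lt: "s < m \<Longrightarrow> s \<in> D" for s
    proof -
      assume "s < m"
      then have "s < Sup D" by (simp add: m_def)
      then obtain t where "t \<in> D" "s < t" by (rule less_cSupE[OF _ ne])
      then show "s \<in> D" using down[of t s] by simp
    qed
    show ?thesis
    proof (cases "m \<in> D")
      case True
      have "D = {..m}"
      proof (intro set_eqI iffI)
        fix t assume "t \<in> {..m}"
        then have "t = m \<or> t < m" by auto
        then show "t \<in> D" using True lt by blast
      qed (use le in auto)
      then show ?thesis by simp
    next
      case False
      have "D = {..<m}"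
      proof (intro set_eqI iffI)
        fix t assume "t \<in> D"
        then have "t \<le> m" "t \<noteq> m" using le False by auto
        then show "t \<in> {..<m}" by simp
      qed (use lt in auto)
      then show ?thesis by simp
    qed
  qed
qed

lemma antitone_borel:
  fixes H :: "real \<Rightarrow> ennreal"
  assumes anti: "\<And>s t. s \<le> t \<Longrightarrow> H t \<le> H s"
  shows "H \<in> borel_measurable borel"
proof (rule borel_measurableI_greater)
  fix y
  have "{x. y < H x} \<in> sets borel"
    by (rule downset_borel) (use anti in \<open>auto intro: less_le_trans\<close>)
  then show "{x \<in> space borel. y < H x} \<in> sets borel" by simp
qed

lemma cont_upd: "continuous_on S (\<lambda>y::nat\<Rightarrow>real. y(i := c))"
proof (rule continuous_on_coordinatewise_then_product)
  fix j
  show "continuous_on S (\<lambda>y::nat\<Rightarrow>real. (y(i := c)) j)"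
    by (cases "j = i") (simp_all add: continuous_on_const cont_coord)
qed

lemma slice_eq: "slice d x0 K i = (\<lambda>y. y(i := x0 i)) -` K \<inter> PiE ({..<d} - {i}) (\<lambda>_. UNIV)"
  by (auto simp: slice_def)

lemma slice_sets:
  assumes "closed K"
  shows "slice d x0 K i \<in> sets (lam_dm1 d i)"
proof -
  have "closed ((\<lambda>y::nat\<Rightarrow>real. y(i := x0 i)) -` K)"
    by (rule closed_vimage[OF assms cont_upd])
  then show ?thesis unfolding slice_eq Leb_def using sets_PiM_closed by auto
qed

lemma slice_mono: "K \<subseteq> K' \<Longrightarrow> slice d x0 K i \<subseteq> slice d x0 K' i"
  by (auto simp: slice_def)

lemma emeasure_box:
  fixes I :: "nat set"
  assumes "finite I" "\<And>j. j \<in> I \<Longrightarrow> l j \<le> h j"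
  shows "emeasure (Leb I) (PiE I (\<lambda>j. {l j..h j})) = (\<Prod>j\<in>I. ennreal (h j - l j))"
proof -
  have s: "PiE I (\<lambda>j. {l j..h j}) \<in> sets (PiM I (\<lambda>_. lborel :: real measure))"
    using assms by (intro sets_PiM_I_finite) auto
  have "emeasure (PiM I (\<lambda>_. lborel)) (PiE I (\<lambda>j. {l j..h j})) = (\<Prod>j\<in>I. emeasure lborel {l j..h j})"
    using assms by (intro PL.emeasure_PiM) auto
  also have "\<dots> = (\<Prod>j\<in>I. ennreal (h j - l j))"
    using assms by (intro prod.cong) auto
  finally show ?thesis using s by (simp add: Leb_def)
qed

lemma pos_slice:
  assumes K: "OU d x0 K" "closed K" and pos: "0 < emeasure (lam_d d) K" and i: "i < d"
  shows "0 < emeasure (lam_dm1 d i) (slice d x0 K i)"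
proof -
  have KD: "K \<subseteq> D0 d x0" using K by (simp add: OU_def)
  have "K \<inter> D0_int d x0 \<noteq> {}"
  proof
    assume "K \<inter> D0_int d x0 = {}"
    then have "K \<subseteq> D0 d x0 - D0_int d x0" using KD by blast
    moreover have "K \<in> sets (lam_d d)"
      using sets_Leb_closed[OF K(2)] KD D0_PiE[of d x0] by blast
    ultimately have "K \<in> null_sets (lam_d d)" using null_sets_subset[OF D0_bd_null] by blast
    then show False using pos by auto
  qed
  then obtain x where x: "x \<in> K" "x \<in> D0_int d x0" by blast
  let ?P = "PiE ({..<d} - {i}) (\<lambda>j. {x0 j..x j})"
  have Psub: "?P \<subseteq> slice d x0 K i"
  proof
    fix y assume y: "y \<in> ?P"
    have "y(i := x0 i) \<in> D0 d x0" using y i by (auto simp: D0_def PiE_def Pi_def extensional_def)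
    moreover have "\<forall>j<d. (y(i := x0 i)) j \<le> x j" using y x(2) by (auto simp: D0_int_def PiE_def Pi_def less_imp_le)
    ultimately have "y(i := x0 i) \<in> K" using K(1) x(1) by (auto simp: OU_def)
    then show "y \<in> slice d x0 K i" using y by (auto simp: slice_def PiE_def Pi_def)
  qed
  have "emeasure (lam_dm1 d i) ?P = (\<Prod>j\<in>{..<d} - {i}. ennreal (x j - x0 j))"
    using x(2) by (intro emeasure_box) (auto simp: D0_int_def less_imp_le)
  also have "\<dots> > 0"
  proof -
    have "(\<Prod>j\<in>{..<d} - {i}. ennreal (x j - x0 j)) \<noteq> 0"
      using x(2) by (auto simp: D0_int_def prod_zero_iff)
    then show ?thesis by (simp add: zero_less_iff_neq_zero)
  qed
  finally have "0 < emeasure (lam_dm1 d i) ?P" .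
  also have "\<dots> \<le> emeasure (lam_dm1 d i) (slice d x0 K i)"
    by (intro emeasure_mono Psub slice_sets K(2))
  finally show ?thesis .
qed

definition Qbox :: "nat \<Rightarrow> (nat \<Rightarrow> real) \<Rightarrow> (nat \<Rightarrow> real) set" where
  "Qbox d x0 = PiE {..<d} (\<lambda>j. {x0 j..x0 j + 1})"

lemma Qbox_closed: "closed (Qbox d x0)"
proof -
  have "Qbox d x0 = PiE {..<d} (\<lambda>_. UNIV) \<inter> (\<Inter>j\<in>{..<d}. {x. x0 j \<le> x j} \<inter> {x. x j \<le> x0 j + 1})"
    by (auto simp: Qbox_def PiE_def Pi_def)
  moreover have "closed {x :: nat \<Rightarrow> real. x0 j \<le> x j}" for j
    by (intro closed_Collect_le continuous_intros) simp
  moreover have "closed {x :: nat \<Rightarrow> real. x j \<le> x0 j + 1}" for j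
    by (intro closed_Collect_le continuous_intros) simp
  ultimately show ?thesis by (simp only:) (intro closed_Int closed_PiE_UNIV closed_INT, auto)
qed

lemma Qbox_OU: "OU d x0 (Qbox d x0)"
  unfolding OU_def
proof (intro conjI ballI impI)
  show "Qbox d x0 \<subseteq> D0 d x0" by (auto simp: Qbox_def D0_def PiE_def Pi_def)
  fix x x' assume x: "x \<in> Qbox d x0" and x': "x' \<in> D0 d x0" and le: "\<forall>j<d. x' j \<le> x j"
  have "\<forall>j<d. x' j \<le> x0 j + 1"
  proof (intro allI impI)
    fix j assume j: "j < d"
    then have "x j \<le> x0 j + 1" using x by (auto simp: Qbox_def PiE_def Pi_def)
    moreover have "x' j \<le> x j" using le j by auto
    ultimately show "x' j \<le> x0 j + 1" by linarith
  qed
  then show "x' \<in> Qbox d x0" using x' by (auto simp: Qbox_def D0_def PiE_def Pi_def)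
qed

lemma Qbox_meas: "emeasure (lam_d d) (Qbox d x0) = 1"
  unfolding Qbox_def by (subst emeasure_box) auto

lemma Qbox_slice: "i < d \<Longrightarrow> slice d x0 (Qbox d x0) i = PiE ({..<d} - {i}) (\<lambda>j. {x0 j..x0 j + 1})"
  by (auto simp: slice_def Qbox_def PiE_def Pi_def extensional_def split: if_splits)

lemma Qbox_slice_meas: "i < d \<Longrightarrow> emeasure (lam_dm1 d i) (slice d x0 (Qbox d x0) i) = 1"
  by (simp add: Qbox_slice emeasure_box)



lemma Bx_borel: "{x::nat\<Rightarrow>real. \<forall>j<d. l j \<le> x j \<and> ereal (x j) \<le> h j} \<in> sets borel"
proof -
  have "{x::nat\<Rightarrow>real. \<forall>j<d. l j \<le> x j \<and> ereal (x j) \<le> h j} = (\<Inter>j\<in>{..<d}. {x. l j \<le> x j \<and> ereal (x j) \<le> h j})"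
    by auto
  moreover have "{x::nat\<Rightarrow>real. l j \<le> x j \<and> ereal (x j) \<le> h j} \<in> sets borel" for j
    by measurable
  ultimately show ?thesis by (cases "d = 0") (auto intro!: sets.finite_INT)
qed

lemma Bx_sets: "Bx d x0 l h \<in> sets (lam_d d)"
proof -
  have "Bx d x0 l h = D0 d x0 \<inter> ({x. \<forall>j<d. l j \<le> x j \<and> ereal (x j) \<le> h j} \<inter> PiE {..<d} (\<lambda>_. UNIV))"
    by (auto simp: Bx_def D0_def)
  moreover have "{x. \<forall>j<d. l j \<le> x j \<and> ereal (x j) \<le> h j} \<inter> PiE {..<d} (\<lambda>_. UNIV) \<in> sets (lam_d d)"
    using sets_PiM_borelset[OF Bx_borel] by (simp add: Leb_def)
  ultimately show ?thesis using D0_sets by auto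
qed



lemma anti_meas:
  assumes "\<And>s t. s \<le> t \<Longrightarrow> A t \<subseteq> A s" "\<And>s. A s \<in> sets M"
  shows "(\<lambda>s::real. emeasure M (A s)) \<in> borel_measurable borel"
  by (rule antitone_borel) (intro emeasure_mono assms)

lemma pointwise_eq:
  fixes H N Nq Q c :: ennreal and good :: bool
  assumes "H \<noteq> \<infinity>" "c \<noteq> \<infinity>"
    and ngood: "\<not> good \<Longrightarrow> H = 0"
  shows "H / c * (if good then N / H else Nq / Q) = N / H * (H / c)"
proof (cases good)
  case True then show ?thesis by (simp add: mult.commute)
next
  case False then have "H = 0" by (rule ngood)
  then show ?thesis by simp
qed

lemma top_div_mult:
  fixes H c :: ennreal
  assumes "H \<noteq> \<infinity>" "H \<noteq> 0" "c \<noteq> \<infinity>"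
  shows "\<infinity> / H * (H / c) = \<infinity>"
  using assms by (simp add: ennreal_top_divide ennreal_mult_eq_top_iff top_unique)

lemma main_step:
  assumes c: "0 < c" and Ss: "S \<in> sets (lam_d d)"
    and fA: "feasA d x0 c u n lo hi a b f"
  shows "\<exists>R G. feasB d x0 c u n lo hi a b S R G \<and> objB d c S R G = objA d x0 c S f"
proof -
  let ?L = "lam_d d"
  have fm: "set_borel_measurable ?L (D0 d x0) f" using fA unfolding feasA_def by blast
  have fnn: "\<forall>x\<in>D0 d x0. 0 \<le> f x" using fA unfolding feasA_def by blast
  have fint: "(\<integral>\<^sup>+ x \<in> D0 d x0. ennreal (f x) \<partial>?L) = ennreal c" using fA unfolding feasA_def by blast
  have fmono: "\<forall>x\<in>D0 d x0. \<forall>x'\<in>D0 d x0. (\<forall>j<d. x' j \<le> x j) \<longrightarrow> f x \<le> f x'"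
    using fA unfolding feasA_def by blast
  define Cb where "Cb s = Cbar d x0 f s" for s
  define H where "H s = emeasure ?L (Cb s)" for s
  define Sl where "Sl i s = emeasure (lam_dm1 d i) (slice d x0 (Cb s) i)" for i s
  have ucon: "\<forall>i<d. (\<integral>\<^sup>+ s\<in>{0<..}. Sl i s / H s * (H s / ennreal c) \<partial>lborel) \<le> ennreal (u i / c)"
    using fA unfolding feasA_def Let_def Sl_def H_def Cb_def by blast
  have bcon: "\<forall>i<n. ennreal (a i) \<le> (\<integral>\<^sup>+ s\<in>{0<..}. emeasure ?L (Bx d x0 (lo i) (hi i) \<inter> Cb s) / H s * (H s / ennreal c) \<partial>lborel) \<and>
      (\<integral>\<^sup>+ s\<in>{0<..}. emeasure ?L (Bx d x0 (lo i) (hi i) \<inter> Cb s) / H s * (H s / ennreal c) \<partial>lborel) \<le> ennreal (b i)"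
    using fA unfolding feasA_def Let_def H_def Cb_def by blast
  define C where "C s = {x \<in> D0 d x0. s \<le> f x}" for s
  have Cb_eq: "Cb s = closure (C s)" for s by (simp add: Cb_def Cbar_def C_def)
  have C_OU: "OU d x0 (C s)" for s
    using fmono by (auto simp: OU_def C_def intro: order_trans)
  define F where "F x = indicator (D0 d x0) x * f x" for x
  have Fm[measurable]: "F \<in> borel_measurable ?L"
  proof -
    have "F = (\<lambda>x. indicator (D0 d x0) x *\<^sub>R f x)" by (auto simp: F_def fun_eq_iff)
    then show ?thesis using fm by (simp add: set_borel_measurable_def)
  qed
  have C_sets: "C s \<in> sets ?L" for s
  proof -
    have "C s = D0 d x0 \<inter> {x \<in> space ?L. s \<le> F x}"
      using D0_PiE[of d x0] by (auto simp: C_def F_def space_Leb)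
    moreover have "{x \<in> space ?L. s \<le> F x} \<in> sets ?L" by measurable
    ultimately show ?thesis using D0_sets by auto
  qed
  have CD: "C s \<subseteq> D0 d x0" for s by (auto simp: C_def)
  have Cb_D: "Cb s \<subseteq> D0 d x0" for s
    unfolding Cb_eq by (rule closure_minimal[OF CD closed_D0])
  have Cb_closed: "closed (Cb s)" for s by (simp add: Cb_eq)
  have Cb_sets: "Cb s \<in> sets ?L" for s
    using sets_Leb_closed[OF Cb_closed] Cb_D D0_PiE[of d x0] by blast
  have Cb_OU: "OU d x0 (Cb s)" for s unfolding Cb_eq by (rule closure_OU[OF C_OU])
  have Cb_anti: "s \<le> t \<Longrightarrow> Cb t \<subseteq> Cb s" for s t
    unfolding Cb_eq by (intro closure_mono) (auto simp: C_def)
  have H_eq: "H s = emeasure ?L (C s)" for s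
    unfolding H_def Cb_eq by (rule closure_measure[OF C_OU C_sets])
  have Hint: "(\<integral>\<^sup>+ s\<in>{0<..}. H s \<partial>lborel) = ennreal c"
    using layer_cake[OF fm fnn] fint by (simp add: H_eq C_def)
  have Hm[measurable]: "H \<in> borel_measurable borel"
    unfolding H_def by (rule anti_meas[OF Cb_anti Cb_sets])
  have Hm': "H \<in> borel_measurable lborel" using Hm by simp
  have Slm[measurable]: "(\<lambda>s. Sl i s) \<in> borel_measurable borel" for i
    unfolding Sl_def by (rule anti_meas[OF slice_mono[OF Cb_anti] slice_sets[OF Cb_closed]])
  have Slm': "(\<lambda>s. Sl i s) \<in> borel_measurable lborel" for i using Slm by simp
  have AEH: "AE s in lborel. 0 < s \<longrightarrow> H s \<noteq> \<infinity>"
  proof -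
    have "AE s in lborel. H s * indicator {0<..} s \<noteq> \<infinity>"
      by (rule nn_integral_noteq_infinite) (use Hint Hm' in auto)
    then show ?thesis by eventually_elim (auto simp: indicator_def)
  qed
  have AESl: "AE s in lborel. 0 < s \<longrightarrow> (\<forall>i\<in>{..<d}. Sl i s / H s * (H s / ennreal c) \<noteq> \<infinity>)"
  proof -
    have "\<forall>i\<in>{..<d}. AE s in lborel. 0 < s \<longrightarrow> Sl i s / H s * (H s / ennreal c) \<noteq> \<infinity>"
    proof
      fix i assume i: "i \<in> {..<d}"
      have "(\<integral>\<^sup>+ s\<in>{0<..}. Sl i s / H s * (H s / ennreal c) \<partial>lborel) \<noteq> \<infinity>"
      proof
        assume eq: "(\<integral>\<^sup>+ s\<in>{0<..}. Sl i s / H s * (H s / ennreal c) \<partial>lborel) = \<infinity>"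
        have "(\<integral>\<^sup>+ s\<in>{0<..}. Sl i s / H s * (H s / ennreal c) \<partial>lborel) \<le> ennreal (u i / c)"
          using i by (intro ucon[rule_format]) simp
        then show False unfolding eq by (simp add: top_unique)
      qed
      then have "AE s in lborel. Sl i s / H s * (H s / ennreal c) * indicator {0<..} s \<noteq> \<infinity>"
        by (intro nn_integral_noteq_infinite) (use Hm' Slm' in auto)
      then show "AE s in lborel. 0 < s \<longrightarrow> Sl i s / H s * (H s / ennreal c) \<noteq> \<infinity>"
        by eventually_elim (auto simp: indicator_def)
    qed
    then have "AE s in lborel. \<forall>i\<in>{..<d}. 0 < s \<longrightarrow> Sl i s / H s * (H s / ennreal c) \<noteq> \<infinity>"
      by (rule eventually_ball_finite[rotated]) simp
    then show ?thesis by eventually_elim auto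
  qed
  define good where "good s \<longleftrightarrow> 0 < H s \<and> H s < \<infinity> \<and> (\<forall>i\<in>{..<d}. Sl i s < \<infinity>)" for s
  have goodm[measurable]: "Measurable.pred borel good" unfolding good_def by measurable
  define R where "R s = (if good s then Cb s else Qbox d x0)" for s
  define G where "G = density (restrict_space lborel {0<..}) (\<lambda>s. H s / ennreal c)"
  have spG: "space G = {0<..}" by (simp add: G_def space_restrict_space)
  have setsG: "sets G = sets (restrict_space borel {0<..})"
    by (simp add: G_def sets_restrict_space)
  have measG: "\<And>g :: real \<Rightarrow> ennreal. g \<in> borel_measurable borel \<Longrightarrow> g \<in> borel_measurable G"
    by (subst measurable_cong_sets[OF setsG refl]) (erule measurable_restrict_space1)
  have measR: "\<And>g :: real \<Rightarrow> ennreal. g \<in> borel_measurable borel \<Longrightarrow> g \<in> borel_measurable (restrict_space lborel {0<..})"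
  proof -
    fix g :: "real \<Rightarrow> ennreal" assume "g \<in> borel_measurable borel"
    then have "g \<in> borel_measurable lborel" by simp
    then show "g \<in> borel_measurable (restrict_space lborel {0<..})" by (rule measurable_restrict_space1)
  qed
  have Hcm: "(\<lambda>s. H s / ennreal c) \<in> borel_measurable borel" by measurable
  have probG: "prob_space G"
  proof
    have top: "{0<..} \<in> sets (restrict_space lborel ({0<..} :: real set))"
      using sets.top[of "restrict_space lborel ({0<..} :: real set)"] by (simp add: space_restrict_space)
    have "emeasure G (space G) = emeasure G {0<..}" using spG by simp
    also have "\<dots> = (\<integral>\<^sup>+ s. H s / ennreal c * indicator {0<..} s \<partial>restrict_space lborel {0<..})"
      unfolding G_def by (rule emeasure_density[OF measR[OF Hcm] top])
    also have "\<dots> = (\<integral>\<^sup>+ s. H s / ennreal c * indicator {0<..} s * indicator {0<..} s \<partial>lborel)"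
      by (rule nn_integral_restrict_space) simp
    also have "\<dots> = (\<integral>\<^sup>+ s. (H s * indicator {0<..} s) / ennreal c \<partial>lborel)"
      by (intro nn_integral_cong) (auto simp: indicator_def)
    also have "\<dots> = (\<integral>\<^sup>+ s. H s * indicator {0<..} s \<partial>lborel) / ennreal c"
      by (rule nn_integral_divide) (use Hm' in measurable)
    also have "\<dots> = 1" using Hint c by simp
    finally show "emeasure G (space G) = 1" .
  qed
  have ngood: "H s = 0" if s: "0 < s" "H s \<noteq> \<infinity>" "\<forall>i\<in>{..<d}. Sl i s / H s * (H s / ennreal c) \<noteq> \<infinity>" "\<not> good s" for s
  proof (rule ccontr)
    assume H0: "H s \<noteq> 0"
    have "\<forall>i\<in>{..<d}. Sl i s < \<infinity>"
    proof
      fix i assume i: "i \<in> {..<d}"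
      show "Sl i s < \<infinity>"
      proof (rule ccontr)
        assume "\<not> Sl i s < \<infinity>"
        then have "Sl i s = \<infinity>" using less_top[of "Sl i s"] by simp
        then have "Sl i s / H s * (H s / ennreal c) = \<infinity>"
          using top_div_mult[OF s(2) H0, of "ennreal c"] by simp
        then show False using s(3) i by blast
      qed
    qed
    moreover have "0 < H s" using H0 by (simp add: zero_less_iff_neq_zero)
    moreover have "H s < \<infinity>" using s(2) by (simp add: less_top)
    ultimately have "good s" unfolding good_def by blast
    then show False using s(4) by blast
  qed
  have transfer: "(\<integral>\<^sup>+ s. Num (R s) / emeasure ?L (R s) \<partial>G) = (\<integral>\<^sup>+ s\<in>{0<..}. Num (Cb s) / H s * (H s / ennreal c) \<partial>lborel)"
    and transm: "(\<lambda>s. Num (R s) / emeasure ?L (R s)) \<in> borel_measurable G"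
    if Nm: "(\<lambda>s. Num (Cb s)) \<in> borel_measurable borel" for Num
  proof -
    have eqR: "(\<lambda>s. Num (R s) / emeasure ?L (R s)) = (\<lambda>s. if good s then Num (Cb s) / H s else Num (Qbox d x0) / emeasure ?L (Qbox d x0))"
      by (auto simp: R_def H_def fun_eq_iff)
    have Phim: "(\<lambda>s. Num (R s) / emeasure ?L (R s)) \<in> borel_measurable borel"
      unfolding eqR using Nm by measurable
    show "(\<lambda>s. Num (R s) / emeasure ?L (R s)) \<in> borel_measurable G" by (rule measG[OF Phim])
    have "(\<integral>\<^sup>+ s. Num (R s) / emeasure ?L (R s) \<partial>G)
        = (\<integral>\<^sup>+ s. H s / ennreal c * (Num (R s) / emeasure ?L (R s)) \<partial>restrict_space lborel {0<..})"
      unfolding G_def by (rule nn_integral_density) (auto intro: measR Hcm Phim)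
    also have "\<dots> = (\<integral>\<^sup>+ s. H s / ennreal c * (Num (R s) / emeasure ?L (R s)) * indicator {0<..} s \<partial>lborel)"
      by (rule nn_integral_restrict_space) simp
    also have "\<dots> = (\<integral>\<^sup>+ s\<in>{0<..}. Num (Cb s) / H s * (H s / ennreal c) \<partial>lborel)"
    proof (rule nn_integral_cong_AE)
      show "AE s in lborel. H s / ennreal c * (Num (R s) / emeasure ?L (R s)) * indicator {0<..} s
           = Num (Cb s) / H s * (H s / ennreal c) * indicator {0<..} s"
        using AEH AESl
      proof eventually_elim
        case (elim s)
        show ?case
        proof (cases "0 < s")
          case True
          have "H s / ennreal c * (Num (R s) / emeasure ?L (R s)) = Num (Cb s) / H s * (H s / ennreal c)"
            unfolding eqR[THEN fun_cong, of s]
            by (rule pointwise_eq) (use elim True ngood in auto)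
          then show ?thesis by simp
        qed simp
      qed
    qed
    finally show "(\<integral>\<^sup>+ s. Num (R s) / emeasure ?L (R s) \<partial>G) = (\<integral>\<^sup>+ s\<in>{0<..}. Num (Cb s) / H s * (H s / ennreal c) \<partial>lborel)" .
  qed
  have Rprops: "\<forall>s>0. closed (R s) \<and> OU d x0 (R s) \<and> 0 < emeasure ?L (R s) \<and> emeasure ?L (R s) < \<infinity> \<and>
        (\<forall>i<d. 0 < emeasure (lam_dm1 d i) (slice d x0 (R s) i) \<and>
               emeasure (lam_dm1 d i) (slice d x0 (R s) i) < \<infinity>)"
  proof (intro allI impI)
    fix s :: real assume "0 < s"
    show "closed (R s) \<and> OU d x0 (R s) \<and> 0 < emeasure ?L (R s) \<and> emeasure ?L (R s) < \<infinity> \<and>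
        (\<forall>i<d. 0 < emeasure (lam_dm1 d i) (slice d x0 (R s) i) \<and>
               emeasure (lam_dm1 d i) (slice d x0 (R s) i) < \<infinity>)"
    proof (cases "good s")
      case True
      then have R: "R s = Cb s" by (simp add: R_def)
      have Hp: "0 < H s" and Hf: "H s < \<infinity>" and Slf: "\<forall>i\<in>{..<d}. Sl i s < \<infinity>"
        using True by (auto simp: good_def)
      have Slp: "0 < Sl i s" if "i < d" for i
        unfolding Sl_def by (rule pos_slice[OF Cb_OU Cb_closed _ that]) (use Hp in \<open>simp add: H_def\<close>)
      show ?thesis using R Cb_closed Cb_OU Hp Hf Slf Slp by (auto simp: H_def Sl_def)
    next
      case False
      then have R: "R s = Qbox d x0" by (simp add: R_def)
      show ?thesis using R Qbox_closed Qbox_OU Qbox_meas Qbox_slice_meas by simp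
    qed
  qed
  have NSm: "(\<lambda>s. emeasure ?L (S \<inter> Cb s)) \<in> borel_measurable borel"
    by (rule anti_meas) (use Cb_anti Ss Cb_sets in auto)
  have NBm: "(\<lambda>s. emeasure ?L (Bx d x0 (lo i) (hi i) \<inter> Cb s)) \<in> borel_measurable borel" for i
    by (rule anti_meas) (use Cb_anti Bx_sets Cb_sets in auto)
  have SLm: "(\<lambda>s. emeasure (lam_dm1 d i) (slice d x0 (Cb s) i)) \<in> borel_measurable borel" for i
    using Slm[of i] by (simp add: Sl_def)
  note trS = transfer[where Num = "\<lambda>K. emeasure ?L (S \<inter> K)", OF NSm]
  note tmS = transm[where Num = "\<lambda>K. emeasure ?L (S \<inter> K)", OF NSm]
  have feas: "feasB d x0 c u n lo hi a b S R G"
    unfolding feasB_def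
  proof (intro conjI)
    show "prob_space G" by (rule probG)
    show "space G = {0<..}" by (rule spG)
    show "sets G = sets (restrict_space borel {0<..})" by (rule setsG)
    show "\<forall>s>0. closed (R s) \<and> OU d x0 (R s) \<and> 0 < emeasure ?L (R s) \<and> emeasure ?L (R s) < \<infinity> \<and>
        (\<forall>i<d. 0 < emeasure (lam_dm1 d i) (slice d x0 (R s) i) \<and>
               emeasure (lam_dm1 d i) (slice d x0 (R s) i) < \<infinity>)" by (rule Rprops)
    show "(\<lambda>s. emeasure ?L (S \<inter> R s) / emeasure ?L (R s)) \<in> borel_measurable G" by (rule tmS)
    show "\<forall>i<d. (\<lambda>s. emeasure (lam_dm1 d i) (slice d x0 (R s) i) / emeasure ?L (R s)) \<in> borel_measurable G"
    proof (intro allI impI)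
      fix i show "(\<lambda>s. emeasure (lam_dm1 d i) (slice d x0 (R s) i) / emeasure ?L (R s)) \<in> borel_measurable G"
        by (rule transm[where Num = "\<lambda>K. emeasure (lam_dm1 d i) (slice d x0 K i)", OF SLm])
    qed
    show "\<forall>i<n. (\<lambda>s. emeasure ?L (Bx d x0 (lo i) (hi i) \<inter> R s) / emeasure ?L (R s)) \<in> borel_measurable G"
    proof (intro allI impI)
      fix i show "(\<lambda>s. emeasure ?L (Bx d x0 (lo i) (hi i) \<inter> R s) / emeasure ?L (R s)) \<in> borel_measurable G"
        by (rule transm[where Num = "\<lambda>K. emeasure ?L (Bx d x0 (lo i) (hi i) \<inter> K)", OF NBm])
    qed
    show "\<forall>i<d. (\<integral>\<^sup>+ s. emeasure (lam_dm1 d i) (slice d x0 (R s) i) / emeasure ?L (R s) \<partial>G) \<le> ennreal (u i / c)"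
    proof (intro allI impI)
      fix i assume i: "i < d"
      have "(\<integral>\<^sup>+ s\<in>{0<..}. Sl i s / H s * (H s / ennreal c) \<partial>lborel) \<le> ennreal (u i / c)"
        using ucon i by blast
      then show "(\<integral>\<^sup>+ s. emeasure (lam_dm1 d i) (slice d x0 (R s) i) / emeasure ?L (R s) \<partial>G) \<le> ennreal (u i / c)"
        by (simp only: transfer[where Num = "\<lambda>K. emeasure (lam_dm1 d i) (slice d x0 K i)", OF SLm] Sl_def)
    qed
    show "\<forall>i<n. ennreal (a i) \<le> (\<integral>\<^sup>+ s. emeasure ?L (Bx d x0 (lo i) (hi i) \<inter> R s) / emeasure ?L (R s) \<partial>G) \<and>
            (\<integral>\<^sup>+ s. emeasure ?L (Bx d x0 (lo i) (hi i) \<inter> R s) / emeasure ?L (R s) \<partial>G) \<le> ennreal (b i)"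
    proof (intro allI impI)
      fix i assume i: "i < n"
      have "ennreal (a i) \<le> (\<integral>\<^sup>+ s\<in>{0<..}. emeasure ?L (Bx d x0 (lo i) (hi i) \<inter> Cb s) / H s * (H s / ennreal c) \<partial>lborel) \<and>
      (\<integral>\<^sup>+ s\<in>{0<..}. emeasure ?L (Bx d x0 (lo i) (hi i) \<inter> Cb s) / H s * (H s / ennreal c) \<partial>lborel) \<le> ennreal (b i)"
        using bcon i by blast
      then show "ennreal (a i) \<le> (\<integral>\<^sup>+ s. emeasure ?L (Bx d x0 (lo i) (hi i) \<inter> R s) / emeasure ?L (R s) \<partial>G) \<and>
            (\<integral>\<^sup>+ s. emeasure ?L (Bx d x0 (lo i) (hi i) \<inter> R s) / emeasure ?L (R s) \<partial>G) \<le> ennreal (b i)"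
        by (simp only: transfer[where Num = "\<lambda>K. emeasure ?L (Bx d x0 (lo i) (hi i) \<inter> K)", OF NBm])
    qed
  qed
  have obj: "objB d c S R G = objA d x0 c S f"
    unfolding objB_def objA_def trS by (simp only: H_def Cb_def)
  show ?thesis using feas obj by blast
qed


theorem mainTheorem5:
  fixes d n :: nat and x0 :: "nat \<Rightarrow> real" and c :: real and u a b :: "nat \<Rightarrow> real"
    and lo :: "nat \<Rightarrow> nat \<Rightarrow> real" and hi :: "nat \<Rightarrow> nat \<Rightarrow> ereal"
    and S :: "(nat \<Rightarrow> real) set"
  assumes "1 \<le> d"
    and "x0 \<in> PiE {..<d} (\<lambda>_. UNIV)"
    and "0 < c"
    and "\<forall>i<d. 0 \<le> u i"
    and "\<forall>i<n. 0 \<le> a i \<and> a i \<le> b i \<and> b i \<le> 1"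
    and "\<forall>i<n. \<forall>j<d. x0 j \<le> lo i j \<and> ereal (lo i j) \<le> hi i j"
    and "S \<subseteq> D0 d x0" and "S \<in> sets (lam_d d)"
  shows "optA d x0 c u n lo hi a b S \<le> optB d x0 c u n lo hi a b S"
proof -
  have "{enn2ereal (objA d x0 c S f) | f. feasA d x0 c u n lo hi a b f}
      \<subseteq> {enn2ereal (objB d c S R G) | R G. feasB d x0 c u n lo hi a b S R G}"
  proof
    fix y assume "y \<in> {enn2ereal (objA d x0 c S f) | f. feasA d x0 c u n lo hi a b f}"
    then obtain f where y: "y = enn2ereal (objA d x0 c S f)" and fA: "feasA d x0 c u n lo hi a b f"
      by blast
    from main_step[OF assms(3) assms(8) fA] obtain R G where
      RG: "feasB d x0 c u n lo hi a b S R G" "objB d c S R G = objA d x0 c S f" by blast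
    show "y \<in> {enn2ereal (objB d c S R G) | R G. feasB d x0 c u n lo hi a b S R G}"
      using RG y by force
  qed
  then show ?thesis unfolding optA_def optB_def by (rule Sup_subset_mono)
qed

end
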